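(* Let $(\psi_\mu)_{\mu\in M}$ be an EF-like sub-$B$ family in which $B'$ is a convex function. Fix $d>0$. For $\mu_0\in M$, let $\mu_1=\mu_1(\mu_0)$ be the solution of $$D_{\psi^*_{\mu_0}}(\mu_1,\mu_0)\,\mathbf{1}(\mu_1\ge\mu_0)=d.$$ Then for any data (any $n$ and any realized $\bar X_n$), the map $\mu_0\mapsto\mathrm{L}_n(\mu_1(\mu_0),\mu_0)$ is nonincreasing on $(-\infty,\bar X_n]\cap M$. Consequently, for each $n$, the confidence set $\mathrm{CI}_n$ defined in the context is an open interval.
   Context: Sub-$\psi_M$ family. Let $M\subset\mathbb{R}$ be a nonempty open convex set. For each $\mu\in M$, $\psi_\mu$ is an extended real-valued convex function with the following properties: - it is finite and strictly convex on a common closed set $\Lambda$; - it is differentiable on its nonempty interior, which contains $0$; - $\psi_\mu(0)=0$ and $\psi_\mu'(0)=\mu$; - its convex conjugate $\psi_\mu^*$ is finite and differentiable on $M$. A distribution $P$ on $\mathbb{R}$ is sub-$\psi_\mu$ if its support lies in $\overline M$, its mean is $\mu$, and $\log\mathbb{E}_Pe^{\lambda X}\le\psi_\mu(\lambda)$ for all $\lambda\in\Lambda$. EF-like sub-$B$ family. The family is EF-like sub-$B$ if there is an extended real-valued convex function $B$, finite, strictly convex and differentiable on $\Lambda=(B')^{-1}(M)$, such that $\psi_\mu(\lambda)=B(\lambda+\theta_\mu)-B(\theta_\mu)$ with $\theta_\mu=(B')^{-1}(\mu)$. Bregman divergence. $D_{\psi^*_{\mu_0}}(z_1,z_2)=\psi^*_{\mu_0}(z_1)-\psi^*_{\mu_0}(z_2)-(\psi^*_{\mu_0})'(z_2)(z_1-z_2)$.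 Statistics. $\bar X_n=\frac1n\sum_{i\le n}X_i$ for the observed data $X_1,X_2,\dots$, and $\mathrm{L}_n(z,\mu_0)=\exp\{n[\lambda\bar X_n-\psi_{\mu_0}(\lambda)]\}$ with $\lambda=(\psi^*_{\mu_0})'(z)$. Confidence sets. Fix $g_\alpha>0$ and integers $1\le n_{\min}<n_{\max}$. For $\mu_0\in M$, let $\mu_1(\mu_0)<\mu_2(\mu_0)$ in $(\mu_0,\infty)\cap M$ solve $$g_\alpha/n_{\max}=D_{\psi^*_{\mu_0}}(\mu_1,\mu_0),\qquad g_\alpha/n_{\min}=D_{\psi^*_{\mu_0}}(\mu_2,\mu_0),$$ and let $L_i=\frac{\partial}{\partial z}D_{\psi^*_{\mu_0}}(z,\mu_0)\big|_{z=\mu_i}$ for $i=1,2$. Define - for $n<n_{\min}$: $\mathrm{CI}_n=\{\mu_0\in M: L_2(\bar X_n-\mu_2)<g_\alpha/n-g_\alpha/n_{\min}\}$; - for $n_{\min}\le n\le n_{\max}$: $\mathrm{CI}_n=\{\mu_0\in M: D_{\psi^*_{\mu_0}}(\bar X_n,\mu_0)<g_\alpha/n \text{ or } \bar X_n<\mu_0\}$; - for $n>n_{\max}$: $\mathrm{CI}_n=\{\mu_0\in M: L_1(\bar X_n-\mu_1)<g_\alpha/n-g_\alpha/n_{\max}\}$. *)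

theory Defs
  imports "HOL-Analysis.Analysis"
begin

definition strictly_convex_on :: "real set \<Rightarrow> (real \<Rightarrow> real) \<Rightarrow> bool" where
  "strictly_convex_on S f \<longleftrightarrow> convex S \<and>
     (\<forall>x\<in>S. \<forall>y\<in>S. \<forall>t. x \<noteq> y \<longrightarrow> 0 < t \<longrightarrow> t < 1 \<longrightarrow>
        f ((1 - t) * x + t * y) < (1 - t) * f x + t * f y)"

text \<open>Convex conjugate of an extended real-valued function that is finite (equal to f)
  on the set D and equal to +infinity outside D: sup over lambda of lambda z - f lambda.\<close>
definition conv_conj :: "(real \<Rightarrow> real) \<Rightarrow> real set \<Rightarrow> real \<Rightarrow> ereal" where
  "conv_conj f D z = (SUP l\<in>D. ereal (l * z - f l))"

text \<open>EF-like sub-B family.  B is finite exactly on Lam = (B')^{-1}(M).\<close>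
definition theta :: "(real \<Rightarrow> real) \<Rightarrow> real set \<Rightarrow> real \<Rightarrow> real" where
  "theta B Lam mu = inv_into Lam (deriv B) mu"

definition psi :: "(real \<Rightarrow> real) \<Rightarrow> real set \<Rightarrow> real \<Rightarrow> real \<Rightarrow> real" where
  "psi B Lam mu l = B (l + theta B Lam mu) - B (theta B Lam mu)"

definition psi_dom :: "(real \<Rightarrow> real) \<Rightarrow> real set \<Rightarrow> real \<Rightarrow> real set" where
  "psi_dom B Lam mu = {l. l + theta B Lam mu \<in> Lam}"

definition psi_star :: "(real \<Rightarrow> real) \<Rightarrow> real set \<Rightarrow> real \<Rightarrow> real \<Rightarrow> ereal" where
  "psi_star B Lam mu z = conv_conj (psi B Lam mu) (psi_dom B Lam mu) z"

definition psi_star' :: "(real \<Rightarrow> real) \<Rightarrow> real set \<Rightarrow> real \<Rightarrow> real \<Rightarrow> real" where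
  "psi_star' B Lam mu z = deriv (\<lambda>w. real_of_ereal (psi_star B Lam mu w)) z"

definition breg :: "(real \<Rightarrow> real) \<Rightarrow> real set \<Rightarrow> real \<Rightarrow> real \<Rightarrow> real \<Rightarrow> ereal" where
  "breg B Lam mu0 z1 z2 =
     psi_star B Lam mu0 z1 - psi_star B Lam mu0 z2 - ereal (psi_star' B Lam mu0 z2 * (z1 - z2))"

definition Ln :: "(real \<Rightarrow> real) \<Rightarrow> real set \<Rightarrow> nat \<Rightarrow> real \<Rightarrow> real \<Rightarrow> real \<Rightarrow> real" where
  "Ln B Lam n xbar z mu0 =
     (let l = psi_star' B Lam mu0 z in exp (real n * (l * xbar - psi B Lam mu0 l)))"

definition slopeD :: "(real \<Rightarrow> real) \<Rightarrow> real set \<Rightarrow> real \<Rightarrow> real \<Rightarrow> real" where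
  "slopeD B Lam mu0 z = deriv (\<lambda>w. real_of_ereal (breg B Lam mu0 w mu0)) z"

text \<open>Confidence set CI_n; mu1, mu2 are the solution maps mu0 \<mapsto> mu_i(mu0).\<close>
definition CI :: "(real \<Rightarrow> real) \<Rightarrow> real set \<Rightarrow> real set \<Rightarrow> real \<Rightarrow> nat \<Rightarrow> nat
     \<Rightarrow> (real \<Rightarrow> real) \<Rightarrow> (real \<Rightarrow> real) \<Rightarrow> nat \<Rightarrow> real \<Rightarrow> real set" where
  "CI B Lam M g nmin nmax mu1 mu2 n xbar =
     (if n < nmin then
        {mu0\<in>M. slopeD B Lam mu0 (mu2 mu0) * (xbar - mu2 mu0) < g / real n - g / real nmin}
      else if n \<le> nmax then
        {mu0\<in>M. breg B Lam mu0 xbar mu0 < ereal (g / real n) \<or> xbar < mu0}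
      else
        {mu0\<in>M. slopeD B Lam mu0 (mu1 mu0) * (xbar - mu1 mu0) < g / real n - g / real nmax})"

end

theory Submission
  imports Defs
begin


locale EF =
  fixes Lam :: "real set" and B phi :: "real \<Rightarrow> real"
  assumes Lo: "open Lam" and Lc: "convex Lam"
    and Bd: "\<And>t. t \<in> Lam \<Longrightarrow> (B has_real_derivative phi t) (at t)"
    and Bc: "convex_on Lam B"
    and pc: "convex_on Lam phi"
    and pinj: "inj_on phi Lam"
begin

lemma grad: assumes "s \<in> Lam" "t \<in> Lam" shows "B t \<ge> B s + phi s * (t - s)"
proof -
  have "B t - B s \<ge> phi s * (t - s)"
    by (rule convex_on_imp_above_tangent[OF Bc])
       (use assms Lo Lc in \<open>auto simp: interior_open convex_connected intro: has_field_derivative_at_within Bd\<close>)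
  then show ?thesis by simp
qed

lemma phi_mono: assumes "s \<in> Lam" "t \<in> Lam" "s \<le> t" shows "phi s \<le> phi t"
proof -
  have "B t \<ge> B s + phi s * (t - s)" "B s \<ge> B t + phi t * (s - t)" using grad assms by auto
  then have "(phi t - phi s) * (t - s) \<ge> 0" by (simp add: algebra_simps)
  then show ?thesis using assms by (cases "s = t") (auto simp: zero_le_mult_iff)
qed

lemma phi_strict: assumes "s \<in> Lam" "t \<in> Lam" "s < t" shows "phi s < phi t"
  using phi_mono[of s t] pinj assms by (metis inj_onD order_less_le)

lemma phi_less_iff: assumes "s \<in> Lam" "t \<in> Lam" shows "phi s < phi t \<longleftrightarrow> s < t"
  using phi_strict phi_mono assms by (metis linorder_not_le)

lemma phi_le_iff: assumes "s \<in> Lam" "t \<in> Lam" shows "phi s \<le> phi t \<longleftrightarrow> s \<le> t"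
  using phi_less_iff assms by (metis linorder_not_le)

lemma Bcont: "continuous_on Lam B"
  using Bd by (meson DERIV_isCont continuous_at_imp_continuous_on)

lemma pcont: "continuous_on Lam phi"
  using convex_on_continuous[OF Lo pc] .

lemma between: assumes "s \<in> Lam" "t \<in> Lam" "s \<le> u" "u \<le> t" shows "u \<in> Lam"
proof -
  have "u \<in> closed_segment s t" using assms by (auto simp: closed_segment_eq_real_ivl)
  then show ?thesis using Lc assms by (meson closed_segment_subset subsetD)
qed

definition G where "G a b = (b - a) * phi b - B b + B a"
definition F where "F x a b = (b - a) * x - B b + B a"

lemma G_strict: assumes "a \<in> Lam" "b2 \<in> Lam" "a < b1" "b1 < b2" shows "G a b1 < G a b2"
proof -
  have b1: "b1 \<in> Lam" using between[of a b2 b1] assms by auto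
  have "B b1 \<ge> B b2 + phi b2 * (b1 - b2)" using grad b1 assms by auto
  moreover have "phi b1 < phi b2" using phi_strict b1 assms by auto
  then have "(b1 - a) * (phi b2 - phi b1) > 0" using assms by auto
  ultimately show ?thesis unfolding G_def by (simp add: algebra_simps)
qed

lemma G_nonneg: assumes "a \<in> Lam" "b \<in> Lam" shows "G a b \<ge> 0"
  using grad[of b a] assms unfolding G_def by (simp add: algebra_simps)

lemma incr: assumes "u \<le> b" "h \<ge> 0" "u \<in> Lam" "b + h \<in> Lam"
  shows "phi (u + h) - phi u \<le> phi (b + h) - phi b"
proof (cases "u = b \<or> h = 0")
  case True then show ?thesis by auto
next
  case False
  then have ub: "u < b" and hp: "h > 0" using assms by auto
  define L where "L = b + h - u"
  have Lp: "L > 0" using ub hp L_def by simp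
  define l where "l = h / L"
  have l0: "l \<ge> 0" "l \<le> 1" using Lp hp ub unfolding l_def L_def by (auto simp: field_simps)
  have lL: "l * L = h" using Lp unfolding l_def by simp
  have e1: "u + h = (1 - l) * u + l * (b + h)" using lL unfolding L_def by (simp add: algebra_simps)
  have e2: "b = (1 - (1 - l)) * u + (1 - l) * (b + h)" using lL unfolding L_def by (simp add: algebra_simps)
  have "phi ((1 - l) * u + l * (b + h)) \<le> (1 - l) * phi u + l * phi (b + h)"
    using convex_onD[OF pc, of l u "b+h"] l0 assms by simp
  then have c1: "phi (u + h) \<le> (1 - l) * phi u + l * phi (b + h)" by (metis e1)
  have "phi ((1 - (1 - l)) * u + (1 - l) * (b + h)) \<le> (1 - (1 - l)) * phi u + (1 - l) * phi (b + h)"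
    using convex_onD[OF pc, of "1 - l" u "b+h"] l0 assms by simp
  then have c2: "phi b \<le> (1 - (1 - l)) * phi u + (1 - l) * phi (b + h)" by (metis e2)
  show ?thesis using c1 c2 by (simp add: algebra_simps)
qed

lemma kstep: assumes "a \<le> b" "h \<ge> 0" "a \<in> Lam" "b + h \<in> Lam"
  shows "(B (b + h) - B b) - (B (a + h) - B a) \<le> (b - a) * (phi (b + h) - phi b)"
proof -
  define c where "c = phi (b + h) - phi b"
  define k where "k u = B (u + h) - B u - c * u" for u
  have inL: "u \<in> Lam" if "a \<le> u" "u \<le> b + h" for u using between[of a "b+h" u] assms that by auto
  have "k b \<le> k a"
  proof (rule DERIV_nonpos_imp_decreasing_open[OF assms(1)])
    fix u assume u: "a < u" "u < b"
    have d1: "((\<lambda>z. B (z + h)) has_real_derivative phi (u+h)) (at u)"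
      using Bd[of "u+h"] DERIV_shift[of B "phi (u+h)" u h] u assms inL by auto
    have "u \<in> Lam" using inL u assms by auto
    then have d2: "(B has_real_derivative phi u) (at u)" using Bd by auto
    have d3: "((\<lambda>z. c * z) has_real_derivative c) (at u)"
      using DERIV_cmult_Id[of c u] by simp
    have "(k has_real_derivative (phi (u + h) - phi u - c)) (at u)"
      unfolding k_def using DERIV_diff[OF DERIV_diff[OF d1 d2] d3] by simp
    moreover have "phi (u + h) - phi u \<le> c"
      unfolding c_def by (rule incr) (use u assms inL in auto)
    ultimately show "\<exists>y. (k has_real_derivative y) (at u) \<and> y \<le> 0" by auto
  next
    have "continuous_on {a..b} (\<lambda>u. B (u + h))"
      by (rule continuous_on_compose2[OF Bcont]) (use assms in \<open>auto intro!: continuous_intros inL\<close>)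
    moreover have "continuous_on {a..b} B"
      by (rule continuous_on_subset[OF Bcont]) (use assms in \<open>auto intro!: inL\<close>)
    ultimately show "continuous_on {a..b} k" unfolding k_def by (auto intro!: continuous_intros)
  qed
  then show ?thesis unfolding k_def c_def by (simp add: algebra_simps)
qed

lemma sol_mono:
  assumes L: "a \<in> Lam" "a' \<in> Lam" "b \<in> Lam" "b' \<in> Lam"
    and o: "a \<le> a'" "a < b" "a' < b'" and g: "G a b = d" "G a' b' = d"
  shows "b \<le> b'" "b' - a' \<le> b - a"
proof -
  show bb: "b \<le> b'"
  proof (rule ccontr)
    assume "\<not> b \<le> b'"
    then have lt: "b' < b" by simp
    have "B a \<ge> B a' + phi a' * (a - a')" using grad L by auto
    moreover have "phi a' \<le> phi b'" using phi_mono L o by auto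
    then have "phi a' * (a' - a) \<le> phi b' * (a' - a)" using o by (simp add: mult_right_mono)
    ultimately have "G a b' \<ge> G a' b'" unfolding G_def by (simp add: algebra_simps)
    moreover have "G a b' < G a b" using G_strict[of a b b'] L o lt by auto
    ultimately show False using g by simp
  qed
  show "b' - a' \<le> b - a"
  proof (rule ccontr)
    assume "\<not> b' - a' \<le> b - a"
    then have lt: "b + (a' - a) < b'" by simp
    have inl: "b + (a' - a) \<in> Lam" using between[of a' b' "b + (a' - a)"] L o lt by auto
    have k: "(B (b + (a' - a)) - B b) - (B (a + (a' - a)) - B a) \<le> (b - a) * (phi (b + (a' - a)) - phi b)"
      by (rule kstep) (use L o inl in auto)
    have "G a' (b + (a' - a)) \<ge> G a b" using k unfolding G_def by (simp add: algebra_simps)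
    moreover have "G a' (b + (a' - a)) < G a' b'" using G_strict[of a' b' "b + (a' - a)"] L o lt by auto
    ultimately show False using g by simp
  qed
qed

lemma F_neg: assumes "a \<in> Lam" "b \<in> Lam" "a < b" "x \<le> phi a" shows "F x a b \<le> 0"
proof -
  have "B b \<ge> B a + phi a * (b - a)" using grad assms by auto
  moreover have "x * (b - a) \<le> phi a * (b - a)" using assms by (simp add: mult_right_mono)
  ultimately show ?thesis unfolding F_def by (simp add: algebra_simps)
qed

lemma F_mono:
  assumes L: "a \<in> Lam" "a' \<in> Lam" "b \<in> Lam" "b' \<in> Lam"
    and o: "a \<le> a'" "a < b" "a' < b'" and g: "G a b = d" "G a' b' = d"
    and x: "phi a' \<le> x"
  shows "F x a' b' \<le> F x a b"
proof -
  have bb: "b \<le> b'" and dd: "b' - a' \<le> b - a" using sol_mono[OF L o g] by auto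
  define y where "y = phi a'"
  have e: "F x a' b' - F x a b = (F y a' b' - F y a b) + ((b' - a') - (b - a)) * (x - y)"
    unfolding F_def by (simp add: algebra_simps)
  have s2: "((b' - a') - (b - a)) * (x - y) \<le> 0"
    using dd x y_def by (simp add: mult_nonpos_nonneg)
  have f1: "F y a' b' \<le> 0" using F_neg[of a' b' y] L o y_def by auto
  have f2: "F y a' b' \<le> F y a b"
  proof (cases "a' \<le> b")
    case True
    have "B a \<ge> B a' + phi a' * (a - a')" using grad L by auto
    moreover have "B b' \<ge> B b + phi b * (b' - b)" using grad L by auto
    moreover have "phi a' * (b' - b) \<le> phi b * (b' - b)"
      using phi_mono[of a' b] L True bb by (simp add: mult_right_mono)
    ultimately show ?thesis unfolding F_def y_def by (simp add: algebra_simps)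
  next
    case False
    have "B a \<ge> B b + phi b * (a - b)" using grad L by auto
    moreover have "phi b * (b - a) \<le> phi a' * (b - a)"
      using phi_mono[of b a'] L False o by (simp add: mult_right_mono)
    ultimately have "F y a b \<ge> 0" unfolding F_def y_def by (simp add: algebra_simps)
    then show ?thesis using f1 by simp
  qed
  show ?thesis using e s2 f2 by simp
qed

end

locale EF2 = EF +
  fixes M :: "real set"
  assumes Mdef: "M = phi ` Lam" and Mo: "open M" and phd: "phi = deriv B" and Mne: "M \<noteq> {}"
    and sd: "\<forall>mu\<in>M. \<forall>z\<in>M. (\<lambda>w. real_of_ereal (psi_star B Lam mu w)) differentiable (at z)"
begin

abbreviation th where "th \<equiv> theta B Lam"

lemma th_def': "th mu = inv_into Lam phi mu" unfolding theta_def phd ..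

lemma th_in: "mu \<in> M \<Longrightarrow> th mu \<in> Lam"
  unfolding th_def' Mdef by (auto intro: inv_into_into)

lemma phi_th: "mu \<in> M \<Longrightarrow> phi (th mu) = mu"
  unfolding th_def' Mdef by (auto intro: f_inv_into_f)

lemma th_phi: "t \<in> Lam \<Longrightarrow> th (phi t) = t"
  unfolding th_def' using pinj by (simp add: inv_into_f_f)

lemma phi_in: "t \<in> Lam \<Longrightarrow> phi t \<in> M" unfolding Mdef by auto

lemma th_le_iff: "mu \<in> M \<Longrightarrow> mu' \<in> M \<Longrightarrow> th mu \<le> th mu' \<longleftrightarrow> mu \<le> mu'"
  using phi_le_iff[of "th mu" "th mu'"] th_in phi_th by auto

lemma th_less_iff: "mu \<in> M \<Longrightarrow> mu' \<in> M \<Longrightarrow> th mu < th mu' \<longleftrightarrow> mu < mu'"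
  using phi_less_iff[of "th mu" "th mu'"] th_in phi_th by auto

lemma psi_dom_eq: "psi_dom B Lam mu = (\<lambda>t. t - th mu) ` Lam"
  unfolding psi_dom_def by (auto simp: image_iff) (metis add_diff_cancel)

lemma psi_star_gen: "psi_star B Lam mu x =
   (SUP t\<in>Lam. ereal (t * x - B t)) + ereal (B (th mu) - th mu * x)"
proof -
  have "psi_star B Lam mu x = (SUP t\<in>Lam. ereal ((t - th mu) * x - psi B Lam mu (t - th mu)))"
    unfolding psi_star_def conv_conj_def psi_dom_eq by (simp add: image_comp o_def)
  also have "\<dots> = (SUP t\<in>Lam. ereal (t * x - B t) + ereal (B (th mu) - th mu * x))"
    unfolding psi_def by (intro SUP_cong) (auto simp: algebra_simps)
  also have "\<dots> = (SUP t\<in>Lam. ereal (t * x - B t)) + ereal (B (th mu) - th mu * x)"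
    by (rule SUP_ereal_add_left) (use Mdef Mne in auto)
  finally show ?thesis .
qed

lemma psi_star_val: assumes "mu \<in> M" "z \<in> M"
  shows "psi_star B Lam mu z = ereal ((th z - th mu) * z - B (th z) + B (th mu))"
proof -
  have "(SUP t\<in>Lam. ereal (t * z - B t)) = ereal (th z * z - B (th z))"
  proof (rule SUP_eqI)
    fix t assume t: "t \<in> Lam"
    have "B t \<ge> B (th z) + phi (th z) * (t - th z)" using grad t th_in assms by auto
    then show "ereal (t * z - B t) \<le> ereal (th z * z - B (th z))"
      using phi_th assms by (simp add: algebra_simps)
  next
    fix y assume "\<And>t. t \<in> Lam \<Longrightarrow> ereal (t * z - B t) \<le> y"
    then show "ereal (th z * z - B (th z)) \<le> y" using th_in assms by auto
  qed
  then show ?thesis unfolding psi_star_gen by (simp add: algebra_simps)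
qed

lemma psi_star'_val: assumes "mu \<in> M" "z \<in> M"
  and dif: "(\<lambda>w. real_of_ereal (psi_star B Lam mu w)) differentiable (at z)"
  shows "psi_star' B Lam mu z = th z - th mu"
proof -
  define h where "h w = real_of_ereal (psi_star B Lam mu w)" for w
  define l0 where "l0 = th z - th mu"
  have D: "(h has_real_derivative deriv h z) (at z)"
    using dif DERIV_deriv_iff_real_differentiable unfolding h_def by blast
  then have D2: "((\<lambda>w. h w - l0 * w) has_real_derivative deriv h z - l0) (at z)"
    using DERIV_diff[OF D DERIV_cmult_Id[of l0 z]] by simp
  obtain e where e: "e > 0" "ball z e \<subseteq> M" using Mo assms openE by blast
  have "\<forall>y. \<bar>z - y\<bar> < e \<longrightarrow> h z - l0 * z \<le> h y - l0 * y"
  proof (intro allI impI)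
    fix y assume "\<bar>z - y\<bar> < e"
    then have y: "y \<in> M" using e by (auto simp: dist_real_def)
    have "B (th z) \<ge> B (th y) + phi (th y) * (th z - th y)" using grad th_in assms y by auto
    then show "h z - l0 * z \<le> h y - l0 * y"
      unfolding h_def l0_def using psi_star_val[OF assms(1) y] psi_star_val[OF assms(1,2)]
        phi_th assms y by (simp add: algebra_simps)
  qed
  then have "deriv h z - l0 = 0" using DERIV_local_min[OF D2 e(1)] by blast
  then show ?thesis unfolding psi_star'_def h_def l0_def by simp
qed

lemma ps'_val: "mu \<in> M \<Longrightarrow> z \<in> M \<Longrightarrow> psi_star' B Lam mu z = th z - th mu"
  using psi_star'_val sd by auto

lemma breg_eq: "mu0 \<in> M \<Longrightarrow> breg B Lam mu0 w mu0 = psi_star B Lam mu0 w"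
  unfolding breg_def using ps'_val[of mu0 mu0] psi_star_val[of mu0 mu0] by (simp add: zero_ereal_def[symmetric])

lemma slopeD_val: "mu0 \<in> M \<Longrightarrow> z \<in> M \<Longrightarrow> slopeD B Lam mu0 z = th z - th mu0"
proof -
  assume a: "mu0 \<in> M" "z \<in> M"
  have "(\<lambda>w. real_of_ereal (breg B Lam mu0 w mu0)) = (\<lambda>w. real_of_ereal (psi_star B Lam mu0 w))"
    using breg_eq[OF a(1)] by simp
  then show ?thesis unfolding slopeD_def using ps'_val[OF a] unfolding psi_star'_def by simp
qed

lemma breg_G: "mu0 \<in> M \<Longrightarrow> z \<in> M \<Longrightarrow> breg B Lam mu0 z mu0 = ereal (G (th mu0) (th z))"
  using breg_eq psi_star_val phi_th unfolding G_def by simp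

lemma Ln_val: "mu0 \<in> M \<Longrightarrow> z \<in> M \<Longrightarrow> Ln B Lam n x z mu0 = exp (real n * F x (th mu0) (th z))"
  unfolding Ln_def Let_def F_def psi_def by (simp add: ps'_val algebra_simps)

lemma th_cont: "continuous_on M th"
proof -
  have "isCont th mu" if mu: "mu \<in> M" for mu
  proof -
    define x where "x = th mu"
    have x: "x \<in> Lam" using th_in mu x_def by auto
    obtain d where d: "d > 0" "cball x d \<subseteq> Lam" using Lo x open_contains_cball by blast
    have zin: "z \<in> Lam" if "\<bar>z - x\<bar> \<le> d" for z using d that by (auto simp: dist_real_def abs_minus_commute)
    have "isCont th (phi x)"
    proof (rule isCont_inverse_function[where f=phi and g=th, OF d(1)])
      fix z assume "\<bar>z - x\<bar> \<le> d"
      then have z: "z \<in> Lam" using zin by auto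
      show "th (phi z) = z" using th_phi z by auto
    next
      fix z assume "\<bar>z - x\<bar> \<le> d"
      then have z: "z \<in> Lam" using zin by auto
      show "isCont phi z" using pcont Lo z continuous_on_eq_continuous_at by blast
    qed
    then show ?thesis using phi_th mu x_def by simp
  qed
  then show ?thesis by (simp add: continuous_at_imp_continuous_on)
qed

lemma open_less: fixes f :: "real \<Rightarrow> real" assumes "continuous_on M f" shows "open {mu\<in>M. f mu < c}"
proof -
  obtain A where "open A" "A \<inter> M = {mu\<in>M. f mu < c}"
    using open_Collect_less_Int[OF assms continuous_on_const[of M c]] by auto
  then show ?thesis using Mo by (metis open_Int)
qed

lemma beta_lemma:
  assumes beta: "\<forall>mu\<in>M. beta mu \<in> M \<and> mu < beta mu \<and> G (th mu) (th (beta mu)) = d"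
    and c: "c > 0"
  shows "open {mu\<in>M. F x (th mu) (th (beta mu)) < c}"
    and "\<And>u v. u \<in> M \<Longrightarrow> F x (th u) (th (beta u)) < c \<Longrightarrow> v \<in> M \<Longrightarrow> u \<le> v \<Longrightarrow>
           F x (th v) (th (beta v)) < c"
    and "\<And>u v. u \<in> M \<Longrightarrow> v \<in> M \<Longrightarrow> u \<le> v \<Longrightarrow> v \<le> x \<Longrightarrow>
           F x (th v) (th (beta v)) \<le> F x (th u) (th (beta u))"
proof -
  have bi: "th (beta mu) \<in> Lam" "th mu < th (beta mu)" "G (th mu) (th (beta mu)) = d" if "mu \<in> M" for mu
    using beta that th_in th_less_iff by auto
  show mono: "F x (th v) (th (beta v)) \<le> F x (th u) (th (beta u))"
    if "u \<in> M" "v \<in> M" "u \<le> v" "v \<le> x" for u v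
    by (rule F_mono) (use that bi th_in th_le_iff phi_th in auto)
  show "F x (th v) (th (beta v)) < c"
    if "u \<in> M" "F x (th u) (th (beta u)) < c" "v \<in> M" "u \<le> v" for u v
  proof (cases "v \<le> x")
    case True then show ?thesis using mono[of u v] that by auto
  next
    case False
    have "F x (th v) (th (beta v)) \<le> 0"
      by (rule F_neg) (use that False bi th_in phi_th in auto)
    then show ?thesis using c by simp
  qed
  define bt where "bt a = th (beta (phi a))" for a
  have btL: "bt a \<in> Lam" if "a \<in> Lam" for a using bi[of "phi a"] phi_in that bt_def by auto
  have lip: "bt a \<le> bt a' \<and> bt a' - bt a \<le> a' - a" if "a \<in> Lam" "a' \<in> Lam" "a \<le> a'" for a a'
    using sol_mono[of a a' "bt a" "bt a'" d] bi[of "phi a"] bi[of "phi a'"] that phi_in th_phi btL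
    unfolding bt_def by auto
  have lip2: "\<bar>bt a' - bt a\<bar> \<le> \<bar>a' - a\<bar>" if "a \<in> Lam" "a' \<in> Lam" for a a'
  proof (cases "a \<le> a'")
    case True then show ?thesis using lip[of a a'] that by auto
  next
    case False then show ?thesis using lip[of a' a] that by auto
  qed
  have btc: "continuous_on Lam bt"
    unfolding continuous_on_iff
  proof (intro ballI allI impI)
    fix a e assume "a \<in> Lam" "(0::real) < e"
    then show "\<exists>d>0. \<forall>a'\<in>Lam. dist a' a < d \<longrightarrow> dist (bt a') (bt a) < e"
      using lip2 by (intro exI[of _ e]) (force simp: dist_real_def)
  qed
  have eq: "th (beta mu) = bt (th mu)" if "mu \<in> M" for mu using phi_th that bt_def by simp
  have c1: "continuous_on M (\<lambda>mu. bt (th mu))"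
    by (rule continuous_on_compose2[OF btc th_cont]) (auto simp: th_in)
  have c2: "continuous_on M (\<lambda>mu. B (bt (th mu)))"
    by (rule continuous_on_compose2[OF Bcont c1]) (auto simp: th_in btL)
  have c3: "continuous_on M (\<lambda>mu. B (th mu))"
    by (rule continuous_on_compose2[OF Bcont th_cont]) (auto simp: th_in)
  have "continuous_on M (\<lambda>mu. F x (th mu) (bt (th mu)))"
    unfolding F_def by (intro continuous_intros c1 c2 c3 th_cont)
  then have "continuous_on M (\<lambda>mu. F x (th mu) (th (beta mu)))"
    by (rule continuous_on_cong[THEN iffD1, rotated 2]) (auto simp: eq)
  then show "open {mu\<in>M. F x (th mu) (th (beta mu)) < c}" by (rule open_less)
qed

lemma mid_lemma:
  shows "open {mu\<in>M. psi_star B Lam mu x < ereal c \<or> x < mu}"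
    and "\<And>u v. u \<in> M \<Longrightarrow> psi_star B Lam u x < ereal c \<or> x < u \<Longrightarrow> v \<in> M \<Longrightarrow> u \<le> v \<Longrightarrow>
           psi_star B Lam v x < ereal c \<or> x < v"
proof -
  define S where "S = (SUP t\<in>Lam. ereal (t * x - B t))"
  define e where "e a = B a - a * x" for a
  have ps: "psi_star B Lam mu x = S + ereal (e (th mu))" for mu
    unfolding S_def e_def psi_star_gen by (simp add: algebra_simps)
  obtain t0 where t0: "t0 \<in> Lam" using Mne Mdef by auto
  have "ereal (t0 * x - B t0) \<le> S" unfolding S_def using t0 by (rule SUP_upper)
  then have Sn: "S \<noteq> -\<infinity>" by auto
  have o2: "open {mu\<in>M. x - mu < 0}" by (rule open_less) (intro continuous_intros)
  have emono: "e (th v) \<le> e (th u)" if "u \<in> M" "v \<in> M" "u \<le> v" "v \<le> x" for u v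
  proof -
    have "B (th u) \<ge> B (th v) + phi (th v) * (th u - th v)" using grad th_in that by auto
    moreover have "th u \<le> th v" using th_le_iff that by auto
    then have "phi (th v) * (th u - th v) \<ge> x * (th u - th v)"
      using phi_th that by (simp add: mult_right_mono_neg)
    ultimately show ?thesis unfolding e_def by (simp add: algebra_simps)
  qed
  show "psi_star B Lam v x < ereal c \<or> x < v"
    if "u \<in> M" "psi_star B Lam u x < ereal c \<or> x < u" "v \<in> M" "u \<le> v" for u v
  proof (cases "x < v")
    case False
    then have "psi_star B Lam u x < ereal c" using that by auto
    moreover have "psi_star B Lam v x \<le> psi_star B Lam u x"
      unfolding ps using emono[of u v] that False by (intro add_left_mono) auto
    ultimately show ?thesis using le_less_trans by blast
  qed simp
  show "open {mu\<in>M. psi_star B Lam mu x < ereal c \<or> x < mu}"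
  proof (cases S)
    case (real s)
    have "{mu\<in>M. psi_star B Lam mu x < ereal c \<or> x < mu} =
          {mu\<in>M. s + e (th mu) < c} \<union> {mu\<in>M. x - mu < 0}"
      unfolding ps real by auto
    moreover have "continuous_on M (\<lambda>mu. s + e (th mu))"
    proof -
      have "continuous_on M (\<lambda>mu. B (th mu))"
        by (rule continuous_on_compose2[OF Bcont th_cont]) (auto simp: th_in)
      then show ?thesis unfolding e_def by (intro continuous_intros th_cont)
    qed
    ultimately show ?thesis using open_less o2 by auto
  next
    case PInf
    then have "{mu\<in>M. psi_star B Lam mu x < ereal c \<or> x < mu} = {mu\<in>M. x - mu < 0}"
      unfolding ps by auto
    then show ?thesis using o2 by simp
  qed (use Sn in auto)
qed

lemma CI_F: assumes "mu \<in> M" "z \<in> M" "G (th mu) (th z) = D"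
  shows "(slopeD B Lam mu z * (x - z) < c - D) \<longleftrightarrow> F x (th mu) (th z) < c"
proof -
  have pz: "phi (th z) = z" using phi_th assms by auto
  have "slopeD B Lam mu z * (x - z) - (c - D) = F x (th mu) (th z) - c"
    using assms(3) pz unfolding slopeD_val[OF assms(1,2)] G_def F_def by (simp add: algebra_simps)
  then show ?thesis by linarith
qed

end

lemma inj_from_strict:
  fixes Lam :: "real set"
  assumes Lo: "open Lam" and sc: "strictly_convex_on Lam B"
    and Bd: "\<And>t. t \<in> Lam \<Longrightarrow> (B has_real_derivative phi t) (at t)"
  shows "inj_on phi Lam" "convex Lam" "convex_on Lam B"
proof -
  show Lc: "convex Lam" using sc unfolding strictly_convex_on_def by auto
  show Bc: "convex_on Lam B"
  proof (rule convex_onI[OF _ Lc])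
    fix t x y assume h: "(0::real) < t" "t < 1" "x \<in> Lam" "y \<in> Lam"
    show "B ((1 - t) *\<^sub>R x + t *\<^sub>R y) \<le> (1 - t) * B x + t * B y"
    proof (cases "x = y")
      case True then show ?thesis by (simp add: algebra_simps)
    next
      case False then show ?thesis using sc h unfolding strictly_convex_on_def by (auto intro: less_imp_le)
    qed
  qed
  have grad: "B t \<ge> B s + phi s * (t - s)" if "s \<in> Lam" "t \<in> Lam" for s t
  proof -
    have "B t - B s \<ge> phi s * (t - s)"
      by (rule convex_on_imp_above_tangent[OF Bc])
         (use that Lo Lc in \<open>auto simp: interior_open convex_connected intro: has_field_derivative_at_within Bd\<close>)
    then show ?thesis by simp
  qed
  have noteq: False if "s \<in> Lam" "t \<in> Lam" "s < t" "phi s = phi t" for s t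
  proof -
    have e: "B t - B s = phi s * (t - s)" using grad[of s t] grad[of t s] that by (simp add: algebra_simps)
    have "B ((1 - 1/2) * s + 1/2 * t) < (1 - 1/2) * B s + 1/2 * B t"
      using sc that unfolding strictly_convex_on_def by (metis less_irrefl half_gt_zero zero_less_one
          field_sum_of_halves less_add_same_cancel1)
    moreover have "(1 - 1/2) * s + 1/2 * t \<in> Lam"
      using convexD[OF Lc, of s t "1 - 1/2" "1/2"] that by simp
    then have "B ((1 - 1/2) * s + 1/2 * t) \<ge> B s + phi s * ((1 - 1/2) * s + 1/2 * t - s)"
      using grad[OF that(1)] by blast
    ultimately show False using e by (simp add: algebra_simps)
  qed
  show "inj_on phi Lam"
  proof (rule inj_onI)
    fix s t assume "s \<in> Lam" "t \<in> Lam" "phi s = phi t"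
    then show "s = t" using noteq[of s t] noteq[of t s] by (metis linorder_neqE_linordered_idom)
  qed
qed

lemma upset_interval:
  fixes U M :: "real set"
  assumes "open U" "U \<subseteq> M" "open M" "convex M"
    and up: "\<And>u v. u \<in> U \<Longrightarrow> v \<in> M \<Longrightarrow> u \<le> v \<Longrightarrow> v \<in> U"
  shows "\<exists>a b::ereal. U = {mu. a < ereal mu \<and> ereal mu < b}"
proof (cases "U = {}")
  case True
  then show ?thesis by (intro exI[of _ 0]) auto
next
  case False
  define a where "a = (INF u\<in>U. ereal u)"
  define b where "b = (SUP u\<in>M. ereal u)"
  have "U = {mu. a < ereal mu \<and> ereal mu < b}"
  proof (intro set_eqI iffI)
    fix mu assume mu: "mu \<in> U"
    obtain e where e: "e > 0" "ball mu e \<subseteq> U" using assms(1) mu openE by blast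
    have "mu - e/2 \<in> U" using e by (auto simp: dist_real_def)
    then have "a \<le> ereal (mu - e/2)" unfolding a_def by (rule INF_lower)
    moreover have "ereal (mu - e/2) < ereal mu" using e by simp
    ultimately have 1: "a < ereal mu" by (rule le_less_trans)
    obtain e' where e': "e' > 0" "ball mu e' \<subseteq> M" using assms(3) mu assms(2) openE by blast
    have "mu + e'/2 \<in> M" using e' by (auto simp: dist_real_def)
    then have "ereal (mu + e'/2) \<le> b" unfolding b_def by (rule SUP_upper)
    moreover have "ereal mu < ereal (mu + e'/2)" using e' by simp
    ultimately have 2: "ereal mu < b" by (metis less_le_trans)
    show "mu \<in> {mu. a < ereal mu \<and> ereal mu < b}" using 1 2 by auto
  next
    fix mu assume "mu \<in> {mu. a < ereal mu \<and> ereal mu < b}"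
    then have h: "a < ereal mu" "ereal mu < b" by auto
    obtain u where u: "u \<in> U" "ereal u < ereal mu" using h(1) unfolding a_def INF_less_iff by auto
    obtain v where v: "v \<in> M" "ereal mu < ereal v" using h(2) unfolding b_def less_SUP_iff by auto
    have "mu \<in> closed_segment u v" using u v by (auto simp: closed_segment_eq_real_ivl)
    then have "mu \<in> M" using assms(2,4) u v by (meson closed_segment_subset subsetD)
    then show "mu \<in> U" using up[of u mu] u by auto
  qed
  then show ?thesis by blast
qed


theorem proposition1:
  fixes M Lam :: "real set" and B :: "real \<Rightarrow> real"
    and d :: real and m :: "real \<Rightarrow> real"
    and g :: real and nmin nmax :: nat and mu1 mu2 :: "real \<Rightarrow> real"
  assumes M_open: "open M" and M_convex: "convex M" and M_ne: "M \<noteq> {}"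
    and Lam_open: "open Lam"
    and B_diff: "\<forall>t\<in>Lam. B differentiable (at t)"
    and B_strict: "strictly_convex_on Lam B"
    and Lam_eq: "Lam = {t\<in>Lam. deriv B t \<in> M}" and M_eq: "M = deriv B ` Lam"
    and B'_convex: "convex_on Lam (deriv B)"
    and star_fin: "\<forall>mu\<in>M. \<forall>z\<in>M. \<bar>psi_star B Lam mu z\<bar> \<noteq> \<infinity>"
    and star_diff: "\<forall>mu\<in>M. \<forall>z\<in>M.
                      (\<lambda>w. real_of_ereal (psi_star B Lam mu w)) differentiable (at z)"
    and d_pos: "d > 0"
    and m_sol: "\<forall>mu0\<in>M. m mu0 \<in> M \<and>
                  breg B Lam mu0 (m mu0) mu0 * ereal (if m mu0 \<ge> mu0 then 1 else 0) = ereal d"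
    and g_pos: "g > 0" and nmin_pos: "1 \<le> nmin" and nmin_nmax: "nmin < nmax"
    and mu12: "\<forall>mu0\<in>M. mu1 mu0 \<in> M \<and> mu2 mu0 \<in> M \<and> mu0 < mu1 mu0 \<and> mu1 mu0 < mu2 mu0 \<and>
                 breg B Lam mu0 (mu1 mu0) mu0 = ereal (g / real nmax) \<and>
                 breg B Lam mu0 (mu2 mu0) mu0 = ereal (g / real nmin)"
  shows "(\<forall>n::nat. \<forall>xbar\<in>closure M.
            antimono_on ({..xbar} \<inter> M) (\<lambda>mu0. Ln B Lam n xbar (m mu0) mu0))
       \<and> (\<forall>n::nat. \<forall>xbar\<in>closure M. n \<ge> 1 \<longrightarrow>
            (\<exists>a b :: ereal. CI B Lam M g nmin nmax mu1 mu2 n xbar = {mu. a < ereal mu \<and> ereal mu < b}))"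
proof -
  have Bd: "\<And>t. t \<in> Lam \<Longrightarrow> (B has_real_derivative deriv B t) (at t)"
    using B_diff DERIV_deriv_iff_real_differentiable by blast
  have ifs: "inj_on (deriv B) Lam" "convex Lam" "convex_on Lam B"
    using inj_from_strict[OF Lam_open B_strict Bd] by auto
  interpret E: EF2 Lam B "deriv B" M
    by unfold_locales (use Lam_open ifs Bd B'_convex M_eq M_open M_ne star_diff in auto)
  have msol: "\<forall>mu\<in>M. m mu \<in> M \<and> mu < m mu \<and> E.G (E.th mu) (E.th (m mu)) = d"
  proof
    fix mu assume mu: "mu \<in> M"
    have mM: "m mu \<in> M" using m_sol mu by auto
    have eq: "breg B Lam mu (m mu) mu * ereal (if m mu \<ge> mu then 1 else 0) = ereal d"
      using m_sol mu by auto
    have ge: "m mu \<ge> mu"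
    proof (rule ccontr)
      assume "\<not> m mu \<ge> mu"
      then have "breg B Lam mu (m mu) mu * ereal (if m mu \<ge> mu then 1 else 0) = 0"
        by (simp add: zero_ereal_def[symmetric])
      then show False using eq d_pos by simp
    qed
    then have Gd: "E.G (E.th mu) (E.th (m mu)) = d" using eq E.breg_G[OF mu mM] by (simp add: one_ereal_def[symmetric])
    have "m mu \<noteq> mu" using Gd d_pos unfolding E.G_def by auto
    then show "m mu \<in> M \<and> mu < m mu \<and> E.G (E.th mu) (E.th (m mu)) = d" using ge mM Gd by auto
  qed
  have part1: "\<forall>n::nat. \<forall>xbar\<in>closure M.
            antimono_on ({..xbar} \<inter> M) (\<lambda>mu0. Ln B Lam n xbar (m mu0) mu0)"
  proof (intro allI ballI monotone_onI)
    fix n :: nat and xbar r s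
    assume r: "r \<in> {..xbar} \<inter> M" and s: "s \<in> {..xbar} \<inter> M" and rs: "r \<le> s"
    have "E.F xbar (E.th s) (E.th (m s)) \<le> E.F xbar (E.th r) (E.th (m r))"
      using E.beta_lemma(3)[OF msol zero_less_one, where x=xbar] r s rs by auto
    then have "real n * E.F xbar (E.th s) (E.th (m s)) \<le> real n * E.F xbar (E.th r) (E.th (m r))"
      by (simp add: mult_left_mono)
    then show "Ln B Lam n xbar (m s) s \<le> Ln B Lam n xbar (m r) r"
      using E.Ln_val msol r s by auto
  qed
  have part2: "\<forall>n::nat. \<forall>xbar\<in>closure M. n \<ge> 1 \<longrightarrow>
            (\<exists>a b :: ereal. CI B Lam M g nmin nmax mu1 mu2 n xbar = {mu. a < ereal mu \<and> ereal mu < b})"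
  proof (intro allI ballI impI)
    fix n :: nat and xbar assume n1: "n \<ge> 1"
    have cpos: "g / real n > 0" using n1 g_pos by auto
    have M_cvx: "convex M" using M_convex .
    show "\<exists>a b :: ereal. CI B Lam M g nmin nmax mu1 mu2 n xbar = {mu. a < ereal mu \<and> ereal mu < b}"
    proof (cases "n < nmin")
      case True
      have s2: "\<forall>mu\<in>M. mu2 mu \<in> M \<and> mu < mu2 mu \<and> E.G (E.th mu) (E.th (mu2 mu)) = g / real nmin"
        using mu12 E.breg_G by auto
      have "CI B Lam M g nmin nmax mu1 mu2 n xbar = {mu\<in>M. E.F xbar (E.th mu) (E.th (mu2 mu)) < g / real n}" (is "_ = ?U")
        unfolding CI_def using True E.CI_F s2 by auto
      moreover have "\<exists>a b :: ereal. ?U = {mu. a < ereal mu \<and> ereal mu < b}"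
        by (rule upset_interval[OF E.beta_lemma(1)[OF s2 cpos, of xbar] _ M_open M_cvx]) (auto intro: E.beta_lemma(2)[OF s2 cpos, where x=xbar])
      ultimately show ?thesis by simp
    next
      case nf: False
      show ?thesis
      proof (cases "n \<le> nmax")
        case True
        have "CI B Lam M g nmin nmax mu1 mu2 n xbar =
              {mu\<in>M. psi_star B Lam mu xbar < ereal (g / real n) \<or> xbar < mu}" (is "_ = ?U")
          unfolding CI_def using True nf E.breg_eq by auto
        moreover have "\<exists>a b :: ereal. ?U = {mu. a < ereal mu \<and> ereal mu < b}"
          by (rule upset_interval[OF E.mid_lemma(1)[of xbar "g / real n"] _ M_open M_cvx]) (use E.mid_lemma(2)[where x=xbar and c="g / real n"] in \<open>simp, blast\<close>)
        ultimately show ?thesis by simp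
      next
        case False
        have s1: "\<forall>mu\<in>M. mu1 mu \<in> M \<and> mu < mu1 mu \<and> E.G (E.th mu) (E.th (mu1 mu)) = g / real nmax"
          using mu12 E.breg_G by auto
        have "CI B Lam M g nmin nmax mu1 mu2 n xbar = {mu\<in>M. E.F xbar (E.th mu) (E.th (mu1 mu)) < g / real n}" (is "_ = ?U")
          unfolding CI_def using False nf E.CI_F s1 by auto
        moreover have "\<exists>a b :: ereal. ?U = {mu. a < ereal mu \<and> ereal mu < b}"
          by (rule upset_interval[OF E.beta_lemma(1)[OF s1 cpos, of xbar] _ M_open M_cvx]) (auto intro: E.beta_lemma(2)[OF s1 cpos, where x=xbar])
        ultimately show ?thesis by simp
      qed
    qed
  qed
  show ?thesis using part1 part2 by blast
qed

end
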